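(* Let $f=(f_1,f_2):\mathbb{R}^2\to\mathbb{R}^2$ be a smooth one-generic mapping having a cusp point at the origin with $f(\mathbf{0})=\mathbf{0}$, and assume $\operatorname{rank}Df(\mathbf{0})=1$, $dJ(\mathbf{0})\ne0$ and $F(\mathbf{0})=\mathbf{0}$. Then there exist rotations $L(x,y)=(ax-by,bx+ay)$, $R(x,y)=(cx-dy,dx+cy)$ ($a^2+b^2=c^2+d^2=1$) such that $g=(g_1,g_2)=L\circ f\circ R$, with $J'=\det Dg$, satisfies $$\frac{\partial g_1}{\partial x}(\mathbf{0})=\frac{\partial g_2}{\partial x}(\mathbf{0})=\frac{\partial g_2}{\partial y}(\mathbf{0})=0,\quad \frac{\partial g_1}{\partial y}(\mathbf{0})\ne0,\quad \frac{\partial J'}{\partial x}(\mathbf{0})=0,\quad \frac{\partial J'}{\partial y}(\mathbf{0})\ne0.$$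
   Context: $J=\det Df$ and $F=Df\cdot(-\partial J/\partial y,\ \partial J/\partial x)^T$. $f$ is one-generic if $dJ\ne0$ on $J^{-1}(0)$ (equivalently, $j^1f$ is transverse to the corank strata). A point $p\in S_1(f)=J^{-1}(0)$ with $T_pS_1(f)=\ker Df(p)$ is a cusp point if it is a simple zero of $dJ(\xi)$ on $S_1(f)$, $\xi$ a nonvanishing vector field along $S_1(f)$ in $\ker Df$. *)

theory Defs
  imports "HOL-Analysis.Analysis"
begin

definition px :: "(real \<times> real \<Rightarrow> real) \<Rightarrow> real \<times> real \<Rightarrow> real" where
  "px g p = deriv (\<lambda>t. g (t, snd p)) (fst p)"

definition py :: "(real \<times> real \<Rightarrow> real) \<Rightarrow> real \<times> real \<Rightarrow> real" where
  "py g p = deriv (\<lambda>t. g (fst p, t)) (snd p)"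

fun pd :: "bool list \<Rightarrow> (real \<times> real \<Rightarrow> real) \<Rightarrow> (real \<times> real \<Rightarrow> real)" where
  "pd [] g = g"
| "pd (b # bs) g = (if b then py else px) (pd bs g)"

definition smooth_fun :: "(real \<times> real \<Rightarrow> real) \<Rightarrow> bool" where
  "smooth_fun g \<longleftrightarrow> (\<forall>bs p. pd bs g differentiable (at p))"

definition smooth_map :: "(real \<times> real \<Rightarrow> real \<times> real) \<Rightarrow> bool" where
  "smooth_map f \<longleftrightarrow> smooth_fun (\<lambda>p. fst (f p)) \<and> smooth_fun (\<lambda>p. snd (f p))"

definition Df :: "(real \<times> real \<Rightarrow> real \<times> real) \<Rightarrow> real \<times> real \<Rightarrow> real \<times> real \<Rightarrow> real \<times> real" where
  "Df f p v = (px (\<lambda>q. fst (f q)) p * fst v + py (\<lambda>q. fst (f q)) p * snd v,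
               px (\<lambda>q. snd (f q)) p * fst v + py (\<lambda>q. snd (f q)) p * snd v)"

definition Jac :: "(real \<times> real \<Rightarrow> real \<times> real) \<Rightarrow> real \<times> real \<Rightarrow> real" where
  "Jac f p = px (\<lambda>q. fst (f q)) p * py (\<lambda>q. snd (f q)) p
           - py (\<lambda>q. fst (f q)) p * px (\<lambda>q. snd (f q)) p"

definition dJ :: "(real \<times> real \<Rightarrow> real \<times> real) \<Rightarrow> real \<times> real \<Rightarrow> real \<times> real \<Rightarrow> real" where
  "dJ f p v = px (Jac f) p * fst v + py (Jac f) p * snd v"

definition Ffield :: "(real \<times> real \<Rightarrow> real \<times> real) \<Rightarrow> real \<times> real \<Rightarrow> real \<times> real" where
  "Ffield f p = Df f p (- py (Jac f) p, px (Jac f) p)"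

definition one_generic :: "(real \<times> real \<Rightarrow> real \<times> real) \<Rightarrow> bool" where
  "one_generic f \<longleftrightarrow> (\<forall>p. Jac f p = 0 \<longrightarrow> (px (Jac f) p, py (Jac f) p) \<noteq> (0, 0))"

text \<open>Cusp point: p in S_1(f) = J^{-1}(0), T_p S_1(f) (= ker dJ(p)) equals ker Df(p), and
  p is a simple zero of dJ(xi) on S_1(f), for a smooth vector field xi that is nonvanishing
  and lies in ker Df along S_1(f) near p. Simple zero: the derivative of dJ(xi) along the
  tangent direction (-J_y, J_x)(p) of S_1(f) at p is nonzero.\<close>
definition cusp_point :: "(real \<times> real \<Rightarrow> real \<times> real) \<Rightarrow> real \<times> real \<Rightarrow> bool" where
  "cusp_point f p \<longleftrightarrow>
     Jac f p = 0 \<and>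
     {v. dJ f p v = 0} = {v. Df f p v = 0} \<and>
     (\<exists>U \<xi>. open U \<and> p \<in> U \<and> smooth_map \<xi> \<and>
        (\<forall>q\<in>U. Jac f q = 0 \<longrightarrow> \<xi> q \<noteq> 0 \<and> Df f q (\<xi> q) = 0) \<and>
        (let \<phi> = (\<lambda>q. dJ f q (\<xi> q)) in
           \<phi> p = 0 \<and>
           px \<phi> p * (- py (Jac f) p) + py \<phi> p * px (Jac f) p \<noteq> 0))"

definition rot :: "real \<Rightarrow> real \<Rightarrow> real \<times> real \<Rightarrow> real \<times> real" where
  "rot a b v = (a * fst v - b * snd v, b * fst v + a * snd v)"

end

theory Submission
  imports Defs
begin


lemma pd_char:
  assumes "h differentiable (at p)"
  shows "(h has_derivative (\<lambda>v. px h p * fst v + py h p * snd v)) (at p)"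
proof -
  obtain h' where hd: "(h has_derivative h') (at p)" using assms differentiable_def by blast
  have lin: "linear h'" using hd has_derivative_linear by blast
  have sc: "h' (t, 0) = t * h' (1,0)" "h' (0,t) = t * h' (0,1)" for t
    using linear_cmul[OF lin, of t "(1::real,0::real)"] linear_cmul[OF lin, of t "(0::real,1::real)"]
    by (auto simp: scaleR_prod_def)
  have d1: "((\<lambda>t. (t, snd p)) has_derivative (\<lambda>t. (t,0))) (at (fst p))"
    by (intro derivative_eq_intros) auto
  have d2: "((\<lambda>t. (fst p, t)) has_derivative (\<lambda>t. (0,t))) (at (snd p))"
    by (intro derivative_eq_intros) auto
  have "((\<lambda>t. h (t, snd p)) has_derivative (\<lambda>t. h' (t,0))) (at (fst p))"
    using has_derivative_compose[OF d1, of h h'] hd by simp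
  hence "((\<lambda>t. h (t, snd p)) has_field_derivative h' (1,0)) (at (fst p))"
    unfolding has_field_derivative_def
    by (rule has_derivative_eq_rhs) (rule ext, metis sc(1) mult.commute)
  hence px: "px h p = h' (1,0)" unfolding px_def by (rule DERIV_imp_deriv)
  have "((\<lambda>t. h (fst p, t)) has_derivative (\<lambda>t. h' (0,t))) (at (snd p))"
    using has_derivative_compose[OF d2, of h h'] hd by simp
  hence "((\<lambda>t. h (fst p, t)) has_field_derivative h' (0,1)) (at (snd p))"
    unfolding has_field_derivative_def
    by (rule has_derivative_eq_rhs) (rule ext, metis sc(2) mult.commute)
  hence py: "py h p = h' (0,1)" unfolding py_def by (rule DERIV_imp_deriv)
  have eq: "h' v = px h p * fst v + py h p * snd v" for v
  proof -
    have "h' v = h' (fst v, 0) + h' (0, snd v)"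
      using linear_add[OF lin, of "(fst v, 0)" "(0, snd v)"] by simp
    thus ?thesis using sc(1)[of "fst v"] sc(2)[of "snd v"] px py by (simp add: mult.commute)
  qed
  have "h' = (\<lambda>v. px h p * fst v + py h p * snd v)" using eq by (rule ext)
  thus ?thesis using hd by simp
qed

lemma px_of:
  assumes "(h has_derivative h') (at p)" shows "px h p = h' (1,0)" "py h p = h' (0,1)"
proof -
  have "h differentiable (at p)" using assms differentiable_def by blast
  from has_derivative_unique[OF pd_char[OF this] assms]
  have "(\<lambda>v. px h p * fst v + py h p * snd v) = h'" .
  hence e: "\<And>v. px h p * fst v + py h p * snd v = h' v" by (rule fun_cong)
  show "px h p = h' (1,0)" using e[of "(1,0)"] by simp
  show "py h p = h' (0,1)" using e[of "(0,1)"] by simp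
qed

lemma rot_deriv: "(rot c d has_derivative rot c d) (at q)"
  unfolding rot_def by (auto intro!: derivative_eq_intros)

lemma comp_rot:
  assumes "h differentiable (at (rot c d q))"
  shows "px (\<lambda>x. h (rot c d x)) q = c * px h (rot c d q) + d * py h (rot c d q)"
    "py (\<lambda>x. h (rot c d x)) q = - d * px h (rot c d q) + c * py h (rot c d q)"
proof -
  have "((\<lambda>x. h (rot c d x)) has_derivative (\<lambda>v. px h (rot c d q) * fst (rot c d v) + py h (rot c d q) * snd (rot c d v))) (at q)"
    using has_derivative_compose[OF rot_deriv pd_char[OF assms]] .
  from px_of[OF this] show "px (\<lambda>x. h (rot c d x)) q = c * px h (rot c d q) + d * py h (rot c d q)"
    "py (\<lambda>x. h (rot c d x)) q = - d * px h (rot c d q) + c * py h (rot c d q)"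
    by (auto simp: rot_def algebra_simps)
qed



lemma lin_pd:
  assumes "u differentiable (at q)" "v differentiable (at q)"
  shows "px (\<lambda>x. a * u x - b * v x) q = a * px u q - b * px v q"
    "py (\<lambda>x. a * u x - b * v x) q = a * py u q - b * py v q"
    "px (\<lambda>x. a * u x + b * v x) q = a * px u q + b * px v q"
    "py (\<lambda>x. a * u x + b * v x) q = a * py u q + b * py v q"
proof -
  have "((\<lambda>x. a * u x - b * v x) has_derivative (\<lambda>w. a * (px u q * fst w + py u q * snd w) - b * (px v q * fst w + py v q * snd w))) (at q)"
    using pd_char[OF assms(1)] pd_char[OF assms(2)] by (intro derivative_eq_intros) auto
  from px_of[OF this] show "px (\<lambda>x. a * u x - b * v x) q = a * px u q - b * px v q"
    "py (\<lambda>x. a * u x - b * v x) q = a * py u q - b * py v q" by simp_all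
  have "((\<lambda>x. a * u x + b * v x) has_derivative (\<lambda>w. a * (px u q * fst w + py u q * snd w) + b * (px v q * fst w + py v q * snd w))) (at q)"
    using pd_char[OF assms(1)] pd_char[OF assms(2)] by (intro derivative_eq_intros) auto
  from px_of[OF this] show "px (\<lambda>x. a * u x + b * v x) q = a * px u q + b * px v q"
    "py (\<lambda>x. a * u x + b * v x) q = a * py u q + b * py v q" by simp_all
qed

lemma det_id:
  fixes a b c d P Q R S :: real
  shows "(a*(c*P+d*Q) - b*(c*R+d*S)) * (b*(-d*P+c*Q) + a*(-d*R+c*S))
       - (a*(-d*P+c*Q) - b*(-d*R+c*S)) * (b*(c*P+d*Q) + a*(c*R+d*S))
       = (a^2+b^2)*(c^2+d^2)*(P*S-Q*R)"
  by (simp add: power2_eq_square algebra_simps)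

theorem mainTheorem13:
  fixes f :: "real \<times> real \<Rightarrow> real \<times> real"
  assumes "smooth_map f"
    and "one_generic f"
    and "cusp_point f (0, 0)"
    and "f (0, 0) = (0, 0)"
    and "dim (range (Df f (0, 0))) = 1"
    and "(px (Jac f) (0, 0), py (Jac f) (0, 0)) \<noteq> (0, 0)"
    and "Ffield f (0, 0) = (0, 0)"
  shows "\<exists>a b c d. a\<^sup>2 + b\<^sup>2 = 1 \<and> c\<^sup>2 + d\<^sup>2 = 1 \<and>
           (let g = rot a b \<circ> f \<circ> rot c d;
                g1 = (\<lambda>p. fst (g p)); g2 = (\<lambda>p. snd (g p)) in
              px g1 (0, 0) = 0 \<and> px g2 (0, 0) = 0 \<and> py g2 (0, 0) = 0 \<and>
              py g1 (0, 0) \<noteq> 0 \<and>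
              px (Jac g) (0, 0) = 0 \<and> py (Jac g) (0, 0) \<noteq> 0)"
proof -
  define f1 where "f1 = (\<lambda>q. fst (f q))"
  define f2 where "f2 = (\<lambda>q. snd (f q))"
  have sm1: "\<And>bs p. pd bs f1 differentiable (at p)" and sm2: "\<And>bs p. pd bs f2 differentiable (at p)"
    using assms(1) unfolding smooth_map_def smooth_fun_def f1_def f2_def by blast+
  have df1: "f1 differentiable (at p)" for p using sm1[of "[]" p] by simp
  have df2: "f2 differentiable (at p)" for p using sm2[of "[]" p] by simp
  have dpd: "px f1 differentiable (at p)" "py f1 differentiable (at p)"
     "px f2 differentiable (at p)" "py f2 differentiable (at p)" for p
    using sm1[of "[False]" p] sm1[of "[True]" p] sm2[of "[False]" p] sm2[of "[True]" p] by simp_all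
  have Jeq: "Jac f = (\<lambda>p. px f1 p * py f2 p - py f1 p * px f2 p)"
    unfolding Jac_def f1_def f2_def by (rule ext) simp
  have dJ: "Jac f differentiable (at p)" for p
    unfolding Jeq using dpd by (intro differentiable_diff differentiable_mult) auto
  define Jx where "Jx = px (Jac f) (0,0)"
  define Jy where "Jy = py (Jac f) (0,0)"
  define n where "n = sqrt (Jx^2 + Jy^2)"
  have npos: "Jx^2 + Jy^2 > 0" using assms(6) unfolding Jx_def Jy_def
    by (simp add: sum_power2_gt_zero_iff)
  hence n0: "n > 0" unfolding n_def by simp
  have nn: "n^2 = Jx^2 + Jy^2" unfolding n_def using npos by simp
  define c where "c = Jy / n"
  define d where "d = - Jx / n"
  have "c^2 + d^2 = (Jy^2 + Jx^2) / n^2" unfolding c_def d_def by (simp add: power_divide add_divide_distrib)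
  hence cd1: "c^2 + d^2 = 1" using nn n0 npos by (simp add: add.commute sum_power2_gt_zero_iff)
  have ker: "{v. dJ f (0,0) v = 0} = {v. Df f (0,0) v = 0}" using assms(3) unfolding cusp_point_def by auto
  have "dJ f (0,0) (c,d) = 0" unfolding dJ_def c_def d_def Jx_def[symmetric] Jy_def[symmetric]
    by (simp add: algebra_simps)
  hence "Df f (0,0) (c,d) = 0" using ker by blast
  hence k1: "px f1 (0,0) * c + py f1 (0,0) * d = 0" and k2: "px f2 (0,0) * c + py f2 (0,0) * d = 0"
    unfolding Df_def f1_def f2_def by (simp_all add: zero_prod_def)
  have "dJ f (0,0) (-d,c) = (Jx^2 + Jy^2) / n"
    unfolding dJ_def c_def d_def Jx_def[symmetric] Jy_def[symmetric]
    by (simp add: power2_eq_square add_divide_distrib)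
  also have "\<dots> = n" unfolding nn[symmetric] using n0 by (simp add: power2_eq_square)
  finally have "dJ f (0,0) (-d,c) = n" .
  hence "Df f (0,0) (-d,c) \<noteq> 0" using ker n0 by force
  define w1 where "w1 = px f1 (0,0) * (-d) + py f1 (0,0) * c"
  define w2 where "w2 = px f2 (0,0) * (-d) + py f2 (0,0) * c"
  have "(w1, w2) \<noteq> (0,0)" using \<open>Df f (0,0) (-d,c) \<noteq> 0\<close>
    unfolding Df_def f1_def f2_def w1_def w2_def by (simp add: zero_prod_def)
  hence wpos: "w1^2 + w2^2 > 0" by (simp add: sum_power2_gt_zero_iff)
  define m where "m = sqrt (w1^2 + w2^2)"
  have m0: "m > 0" unfolding m_def using wpos by simp
  have mm: "m^2 = w1^2 + w2^2" unfolding m_def using wpos by simp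
  define a where "a = w1 / m"
  define b where "b = - w2 / m"
  have "a^2 + b^2 = (w1^2 + w2^2) / m^2" unfolding a_def b_def by (simp add: power_divide add_divide_distrib)
  hence ab1: "a^2 + b^2 = 1" using mm m0 wpos by (simp add: sum_power2_gt_zero_iff)
  define g where "g = rot a b \<circ> f \<circ> rot c d"
  define g1 where "g1 = (\<lambda>p. fst (g p))"
  define g2 where "g2 = (\<lambda>p. snd (g p))"
  have g1e: "g1 = (\<lambda>x. a * f1 (rot c d x) - b * f2 (rot c d x))"
    unfolding g1_def g_def f1_def f2_def by (rule ext) (simp add: rot_def)
  have g2e: "g2 = (\<lambda>x. b * f1 (rot c d x) + a * f2 (rot c d x))"
    unfolding g2_def g_def f1_def f2_def by (rule ext) (simp add: rot_def)
  have dr: "rot c d differentiable (at q)" for q using rot_deriv differentiable_def by blast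
  have dc1: "(\<lambda>x. f1 (rot c d x)) differentiable (at q)" for q
    using differentiable_chain_at[OF dr df1] by (simp add: o_def)
  have dc2: "(\<lambda>x. f2 (rot c d x)) differentiable (at q)" for q
    using differentiable_chain_at[OF dr df2] by (simp add: o_def)
  note C1 = comp_rot[OF df1] and C2 = comp_rot[OF df2]
  have G: "px g1 q = a * (c * px f1 (rot c d q) + d * py f1 (rot c d q)) - b * (c * px f2 (rot c d q) + d * py f2 (rot c d q))"
    "py g1 q = a * (- d * px f1 (rot c d q) + c * py f1 (rot c d q)) - b * (- d * px f2 (rot c d q) + c * py f2 (rot c d q))"
    "px g2 q = b * (c * px f1 (rot c d q) + d * py f1 (rot c d q)) + a * (c * px f2 (rot c d q) + d * py f2 (rot c d q))"
    "py g2 q = b * (- d * px f1 (rot c d q) + c * py f1 (rot c d q)) + a * (- d * px f2 (rot c d q) + c * py f2 (rot c d q))"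
    for q
    unfolding g1e g2e lin_pd[OF dc1 dc2] C1 C2 by simp_all
  have Jg: "Jac g = (\<lambda>q. Jac f (rot c d q))"
  proof
    fix q
    have "Jac g q = px g1 q * py g2 q - py g1 q * px g2 q"
      unfolding Jac_def g1_def g2_def by simp
    also have "\<dots> = (a^2+b^2)*(c^2+d^2)*(px f1 (rot c d q) * py f2 (rot c d q) - py f1 (rot c d q) * px f2 (rot c d q))"
      unfolding G by (rule det_id)
    also have "\<dots> = Jac f (rot c d q)" using ab1 cd1 Jeq by simp
    finally show "Jac g q = Jac f (rot c d q)" .
  qed
  have r0: "rot c d (0,0) = (0,0)" by (simp add: rot_def)
  have JC: "px (Jac g) (0,0) = c * Jx + d * Jy" "py (Jac g) (0,0) = - d * Jx + c * Jy"
    unfolding Jg comp_rot[OF dJ] r0 Jx_def Jy_def by simp_all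
  have k1': "c * px f1 (0,0) + d * py f1 (0,0) = 0" using k1 by (simp add: mult.commute)
  have k2': "c * px f2 (0,0) + d * py f2 (0,0) = 0" using k2 by (simp add: mult.commute)
  have w1': "- d * px f1 (0,0) + c * py f1 (0,0) = w1" unfolding w1_def by (simp add: mult.commute)
  have w2': "- d * px f2 (0,0) + c * py f2 (0,0) = w2" unfolding w2_def by (simp add: mult.commute)
  have e1: "px g1 (0,0) = 0" unfolding G r0 k1' k2' by simp
  have e2: "px g2 (0,0) = 0" unfolding G r0 k1' k2' by simp
  have e3: "py g2 (0,0) = 0" unfolding G r0 w1' w2' a_def b_def
    by (simp add: algebra_simps)
  have "py g1 (0,0) = (w1^2 + w2^2) / m" unfolding G r0 w1' w2' a_def b_def
    by (simp add: power2_eq_square add_divide_distrib)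
  also have "\<dots> = m" unfolding mm[symmetric] using m0 by (simp add: power2_eq_square)
  finally have e4: "py g1 (0,0) = m" .
  have e5: "px (Jac g) (0,0) = 0" unfolding JC c_def d_def by (simp add: algebra_simps)
  have "py (Jac g) (0,0) = (Jx^2 + Jy^2) / n" unfolding JC c_def d_def
    by (simp add: power2_eq_square add_divide_distrib)
  also have "\<dots> = n" unfolding nn[symmetric] using n0 by (simp add: power2_eq_square)
  finally have e6: "py (Jac g) (0,0) = n" .
  show ?thesis
    apply (rule exI[of _ a], rule exI[of _ b], rule exI[of _ c], rule exI[of _ d])
    unfolding Let_def g_def[symmetric] g1_def[symmetric] g2_def[symmetric]
    using ab1 cd1 e1 e2 e3 e4 e5 e6 m0 n0 by simp
qed

end
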